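(* Let $\mathcal N$ be a $d$-dimensional real normed space with norm $\|\cdot\|$, let $k\in\mathbb N$, and let $c_1,\dots,c_m$ be $m$ distinct points of $\mathcal N$, with $m\geq 2$ and $m\geq k+1$. Then the $k$-th closed sphere-of-influence graph on $\{c_1,\dots,c_m\}$ has at least two vertices of degree smaller than $\vartheta(\mathcal N)\,k$, and $\vartheta(\mathcal N)\,k\leq 5^d k$.
   Context: For $c\in\mathcal N$ and $r\geq 0$, $B(c,r)=\{x\in\mathcal N:\|x-c\|\leq r\}$ is the closed ball. For each $i\in\{1,\dots,m\}$, let $r_i^{(k)}$ be the smallest $r$ such that the set $\{j\in\{1,\dots,m\}: j\neq i,\ \|c_i-c_j\|\leq r\}$ has at least $k$ elements (this requires $m\geq k+1$). The $k$-th closed sphere-of-influence graph on $\{c_1,\dots,c_m\}$ has vertex set $\{c_1,\dots,c_m\}$, and $c_i$, $c_j$ ($i\neq j$) are adjacent whenever $B(c_i,r_i^{(k)})\cap B(c_j,r_j^{(k)})\neq\emptyset$. The quantity $\vartheta(\mathcal N)$ is the largest number of points in the ball $B(o,2)$ ($o$ the origin) such that any two of the points are at distance at least $1$ and one of the points is $o$. *)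

theory Defs
  imports "HOL-Analysis.Analysis"
begin

definition has_dimension :: "'a::real_normed_vector itself \<Rightarrow> nat \<Rightarrow> bool" where
  "has_dimension TYPE('a) d \<longleftrightarrow>
     (\<exists>B::'a set. finite B \<and> independent B \<and> span B = UNIV \<and> card B = d)"

definition knn_radius :: "nat \<Rightarrow> 'a::real_normed_vector set \<Rightarrow> 'a \<Rightarrow> real" where
  "knn_radius k C c = Inf {r. r \<ge> 0 \<and> card {x \<in> C. x \<noteq> c \<and> norm (c - x) \<le> r} \<ge> k}"

definition csig_adj :: "nat \<Rightarrow> 'a::real_normed_vector set \<Rightarrow> 'a \<Rightarrow> 'a \<Rightarrow> bool" where
  "csig_adj k C x y \<longleftrightarrow> x \<in> C \<and> y \<in> C \<and> x \<noteq> y \<and>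
     cball x (knn_radius k C x) \<inter> cball y (knn_radius k C y) \<noteq> {}"

definition csig_degree :: "nat \<Rightarrow> 'a::real_normed_vector set \<Rightarrow> 'a \<Rightarrow> nat" where
  "csig_degree k C x = card {y \<in> C. csig_adj k C x y}"

definition theta :: "'a::real_normed_vector itself \<Rightarrow> nat" where
  "theta TYPE('a) = Sup {card S | S::'a set. finite S \<and> 0 \<in> S \<and> S \<subseteq> cball 0 2 \<and>
       (\<forall>x\<in>S. \<forall>y\<in>S. x \<noteq> y \<longrightarrow> norm (x - y) \<ge> 1)}"

end

theory Submission
  imports Defs
begin

lemma lborel_affine_pre:
  fixes c t :: real and A :: "real set"
  assumes "c > 0" "A \<in> sets lborel"
  shows "ennreal c * emeasure lborel ((\<lambda>y. t + c * y) -` A) = emeasure lborel A"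
proof -
  have "emeasure lborel A = emeasure (density (distr lborel borel (\<lambda>x. t + c * x)) (\<lambda>_. ennreal \<bar>c\<bar>)) A"
    using lborel_real_affine[of c t] assms by simp
  also have "\<dots> = ennreal c * emeasure (distr lborel borel (\<lambda>x. t + c * x)) A"
    using assms by (subst emeasure_density_const) auto
  also have "\<dots> = ennreal c * emeasure lborel ((\<lambda>y. t + c * y) -` A)"
    using assms by (subst emeasure_distr) auto
  finally show ?thesis by simp
qed

lemma PiM_affine:
  fixes I :: "nat set" and c :: real and t :: "nat \<Rightarrow> real"
  assumes I: "finite I" and c: "c > 0" and X: "X \<in> sets (PiM I (\<lambda>_. lborel))"
  shows "emeasure (PiM I (\<lambda>_. lborel)) X = ennreal (c ^ card I) *
     emeasure (PiM I (\<lambda>_. lborel)) ((\<lambda>x. restrict (\<lambda>i. t i + c * x i) I) -` X \<inter> space (PiM I (\<lambda>_. lborel)))"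
proof -
  define M where "M = PiM I (\<lambda>_. lborel :: real measure)"
  define f where "f = (\<lambda>x::nat\<Rightarrow>real. restrict (\<lambda>i. t i + c * x i) I)"
  interpret product_sigma_finite "\<lambda>_::nat. lborel :: real measure" by standard
  have fm: "f \<in> measurable M M"
    unfolding f_def M_def by measurable
  have eq: "density (distr M M f) (\<lambda>_. ennreal (c ^ card I)) = M"
    unfolding M_def
  proof (rule PiM_eqI[OF I])
    show "sets (density (distr (Pi\<^sub>M I (\<lambda>_. lborel)) (Pi\<^sub>M I (\<lambda>_. lborel)) f) (\<lambda>_. ennreal (c ^ card I))) = sets (Pi\<^sub>M I (\<lambda>_. lborel))"
      by simp
    fix A assume A: "\<And>i. i \<in> I \<Longrightarrow> A i \<in> sets (lborel :: real measure)"
    have PA: "Pi\<^sub>E I A \<in> sets M" unfolding M_def using A by (intro sets_PiM_I_finite I) auto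
    have pre: "f -` Pi\<^sub>E I A \<inter> space M = Pi\<^sub>E I (\<lambda>i. (\<lambda>y. t i + c * y) -` A i)"
      unfolding f_def M_def by (auto simp: space_PiM PiE_iff extensional_def)
    have "emeasure (density (distr M M f) (\<lambda>_. ennreal (c ^ card I))) (Pi\<^sub>E I A)
        = ennreal (c ^ card I) * emeasure M (f -` Pi\<^sub>E I A \<inter> space M)"
      using PA fm by (simp add: emeasure_density_const emeasure_distr)
    also have "\<dots> = ennreal (c ^ card I) * (\<Prod>i\<in>I. emeasure lborel ((\<lambda>y. t i + c * y) -` A i))"
    proof -
      have "\<And>i. i \<in> I \<Longrightarrow> (\<lambda>y. t i + c * y) -` A i \<in> sets borel"
      proof -
        fix i assume "i \<in> I"
        then have [measurable]: "A i \<in> sets borel" using A by simp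
        have "(\<lambda>y. t i + c * y) -` A i = (\<lambda>y. t i + c * y) -` A i \<inter> space borel" by simp
        also have "\<dots> \<in> sets borel" by measurable
        finally show "(\<lambda>y. t i + c * y) -` A i \<in> sets borel" .
      qed
      then show ?thesis unfolding pre unfolding M_def by (subst emeasure_PiM[OF I]) auto
    qed
    also have "\<dots> = (\<Prod>i\<in>I. ennreal c * emeasure lborel ((\<lambda>y. t i + c * y) -` A i))"
      using c by (simp add: prod.distrib ennreal_power)
    also have "\<dots> = (\<Prod>i\<in>I. emeasure lborel (A i))"
      using A c by (intro prod.cong refl lborel_affine_pre) auto
    finally show "emeasure (density (distr (Pi\<^sub>M I (\<lambda>_. lborel)) (Pi\<^sub>M I (\<lambda>_. lborel)) f) (\<lambda>_. ennreal (c ^ card I))) (Pi\<^sub>E I A) = (\<Prod>i\<in>I. emeasure lborel (A i))"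
      unfolding M_def .
  qed
  have "emeasure M X = emeasure (density (distr M M f) (\<lambda>_. ennreal (c ^ card I))) X"
    by (simp add: eq)
  also have "\<dots> = ennreal (c ^ card I) * emeasure M (f -` X \<inter> space M)"
    using X fm unfolding M_def by (simp add: emeasure_density_const emeasure_distr)
  finally show ?thesis unfolding M_def f_def .
qed

lemma coord_zero:
  fixes b :: "nat \<Rightarrow> 'a::real_normed_vector"
  assumes inj: "inj_on b {..<d}" and ind: "independent (b ` {..<d})"
    and z: "(\<Sum>j<d. x j *\<^sub>R b j) = 0" and i: "i < d"
  shows "x i = 0"
proof (rule ccontr)
  assume nz: "x i \<noteq> 0"
  define u where "u v = x (the_inv_into {..<d} b v)" for v
  have "(\<Sum>v\<in>b ` {..<d}. u v *\<^sub>R v) = (\<Sum>j<d. u (b j) *\<^sub>R b j)"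
    using inj by (simp add: sum.reindex)
  also have "\<dots> = (\<Sum>j<d. x j *\<^sub>R b j)"
    using inj by (intro sum.cong refl) (simp add: u_def the_inv_into_f_f)
  finally have "(\<Sum>v\<in>b ` {..<d}. u v *\<^sub>R v) = 0" using z by simp
  moreover have "u (b i) \<noteq> 0" using nz inj i by (simp add: u_def the_inv_into_f_f)
  ultimately have "dependent (b ` {..<d})"
    using i by (subst real_vector.dependent_finite) auto
  with ind show False by simp
qed

lemma coord_surj:
  fixes b :: "nat \<Rightarrow> 'a::real_normed_vector"
  assumes inj: "inj_on b {..<d}" and sp: "span (b ` {..<d}) = UNIV"
  shows "\<exists>x. (\<Sum>j<d. x j *\<^sub>R b j) = v"
proof -
  have "v \<in> span (b ` {..<d})" using sp by simp
  then obtain u where u: "(\<Sum>w\<in>b ` {..<d}. u w *\<^sub>R w) = v"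
    by (auto simp: real_vector.span_finite)
  have "(\<Sum>j<d. u (b j) *\<^sub>R b j) = v" using u inj by (simp add: sum.reindex)
  then show ?thesis by (rule exI[of _ "\<lambda>j. u (b j)"])
qed

lemma norm_equiv:
  fixes b :: "nat \<Rightarrow> 'a::real_normed_vector"
  assumes inj: "inj_on b {..<d}" and ind: "independent (b ` {..<d})"
  shows "\<exists>R>0. \<forall>x. \<forall>i<d. \<bar>x i\<bar> \<le> R * norm (\<Sum>j<d. x j *\<^sub>R b j)"
proof (cases "d = 0")
  case True then show ?thesis by (intro exI[of _ 1]) auto
next
  case False
  define N where "N x = norm (\<Sum>j<d. x j *\<^sub>R b j)" for x :: "nat \<Rightarrow> real"
  define K0 where "K0 = PiE UNIV (\<lambda>i::nat. if i < d then {-1..1::real} else {0})"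
  define S where "S = K0 \<inter> (\<Union>i<d. {x. \<bar>x i\<bar> = 1})"
  have "compactin (product_topology (\<lambda>_. euclidean) UNIV) K0"
    unfolding K0_def by (subst compactin_PiE) auto
  then have cK0: "compact K0" by (simp add: euclidean_product_topology)
  have "closed (\<Union>i<d. {x::nat\<Rightarrow>real. \<bar>x i\<bar> = 1})"
    by (intro closed_UN finite_lessThan ballI closed_Collect_eq continuous_intros)
       (auto intro: continuous_on_product_coordinates)
  then have cS: "compact S" unfolding S_def using cK0 by (rule compact_Int_closed[rotated])
  have ne: "S \<noteq> {}"
  proof -
    have "(\<lambda>j. if j = 0 then 1 else 0) \<in> S" using False unfolding S_def K0_def by auto
    then show ?thesis by blast
  qed
  have cN: "continuous_on S N"
    unfolding N_def by (intro continuous_intros) (auto intro: continuous_on_subset[OF continuous_on_product_coordinates])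
  obtain z where zS: "z \<in> S" and zmin: "\<And>y. y \<in> S \<Longrightarrow> N z \<le> N y"
    using continuous_attains_inf[OF cS ne cN] by blast
  have mpos: "N z > 0"
  proof (rule ccontr)
    assume "\<not> N z > 0"
    then have "(\<Sum>j<d. z j *\<^sub>R b j) = 0" unfolding N_def by simp
    then have "\<forall>i<d. z i = 0" using coord_zero[OF inj ind] by blast
    with zS show False unfolding S_def by auto
  qed
  show ?thesis
  proof (intro exI[of _ "1 / N z"] conjI allI impI)
    show "1 / N z > 0" using mpos by simp
    fix x :: "nat \<Rightarrow> real" and i assume i: "i < d"
    have "\<bar>x i\<bar> \<le> 1 / N z * N x"
    proof (cases "\<forall>j<d. x j = 0")
      case True then show ?thesis using i mpos by (simp add: N_def)
    next
      case F: False
      define s where "s = Max ((\<lambda>j. \<bar>x j\<bar>) ` {..<d})"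
      have sge: "\<bar>x j\<bar> \<le> s" if "j < d" for j unfolding s_def using that by (intro Max_ge) auto
      have "s \<in> (\<lambda>j. \<bar>x j\<bar>) ` {..<d}" unfolding s_def using False by (intro Max_in) auto
      then obtain j0 where j0: "j0 < d" "s = \<bar>x j0\<bar>" by auto
      have spos: "s > 0" using F sge by (metis abs_le_zero_iff le_less_linear order.strict_trans2)
      define y where "y j = (if j < d then x j / s else 0)" for j
      have yS: "y \<in> S" unfolding S_def K0_def
      proof
        show "y \<in> PiE UNIV (\<lambda>i::nat. if i < d then {-1..1::real} else {0})"
          using sge spos by (force simp: y_def abs_le_iff divide_le_eq le_divide_eq)
        show "y \<in> (\<Union>i<d. {x. \<bar>x i\<bar> = 1})"
          using j0 spos by (auto simp: y_def intro!: bexI[of _ j0])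
      qed
      have "N y = N x / s"
      proof -
        have "(\<Sum>j<d. y j *\<^sub>R b j) = (1 / s) *\<^sub>R (\<Sum>j<d. x j *\<^sub>R b j)"
          by (simp add: y_def scaleR_sum_right)
        then show ?thesis using spos by (simp add: N_def)
      qed
      with zmin[OF yS] have "N z \<le> N x / s" by simp
      then have "s \<le> N x / N z" using mpos spos by (simp add: field_simps)
      with sge[OF i] show ?thesis by simp
    qed
    then show "\<bar>x i\<bar> \<le> 1 / N z * norm (\<Sum>j<d. x j *\<^sub>R b j)" by (simp add: N_def)
  qed
qed

lemma packing:
  fixes P :: "'a::real_normed_vector set"
  assumes dim: "has_dimension TYPE('a) d" and fin: "finite P" and sub: "P \<subseteq> cball 0 2"
    and sep: "\<forall>x\<in>P. \<forall>y\<in>P. x \<noteq> y \<longrightarrow> 1 \<le> norm (x - y)"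
  shows "card P \<le> 5 ^ d"
proof -
  obtain B :: "'a set" where B: "finite B" "independent B" "span B = UNIV" "card B = d"
    using dim unfolding has_dimension_def by blast
  obtain b where bb: "bij_betw b {..<d} B"
    using ex_bij_betw_nat_finite[OF B(1)] B(4) by (auto simp: atLeast0LessThan)
  then have inj: "inj_on b {..<d}" and img: "b ` {..<d} = B" by (auto simp: bij_betw_def)
  have ind: "independent (b ` {..<d})" and sp: "span (b ` {..<d}) = UNIV" using B img by auto
  define \<phi> where "\<phi> x = (\<Sum>j<d. x j *\<^sub>R b j)" for x :: "nat \<Rightarrow> real"
  define M where "M = PiM {..<d} (\<lambda>_. lborel :: real measure)"
  define K where "K q \<rho> = {x \<in> space M. norm (\<phi> x - q) < \<rho>}" for q \<rho>
  have idm: "(\<lambda>x. x) \<in> borel_measurable M"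
  proof (rule measurable_coordinatewise_then_product)
    fix i :: nat
    show "(\<lambda>x. x i) \<in> borel_measurable M"
    proof (cases "i < d")
      case True
      have "(\<lambda>x. x i) \<in> measurable M lborel" using True unfolding M_def by (intro measurable_component_singleton) auto
      then show ?thesis by simp
    next
      case False
      have "(\<lambda>x. undefined) \<in> borel_measurable M" by simp
      moreover have "\<And>x. x \<in> space M \<Longrightarrow> undefined = x i"
        using False unfolding M_def by (auto simp: space_PiM PiE_def extensional_def)
      ultimately show ?thesis by (rule measurable_cong[THEN iffD1, rotated])
    qed
  qed
  have Km: "K q \<rho> \<in> sets M" for q \<rho>
  proof -
    have "continuous_on UNIV (\<lambda>x. norm (\<phi> x - q))"
      unfolding \<phi>_def by (intro continuous_intros) auto
    then have "(\<lambda>x. norm (\<phi> x - q)) \<in> borel_measurable borel"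
      by (rule borel_measurable_continuous_onI)
    then have g: "(\<lambda>x. norm (\<phi> x - q)) \<in> borel_measurable M"
      using idm by (rule measurable_compose[rotated])
    have "K q \<rho> = (\<lambda>x. norm (\<phi> x - q)) -` {..<\<rho>} \<inter> space M" unfolding K_def by auto
    also have "\<dots> \<in> sets M" using g by (rule measurable_sets) auto
    finally show ?thesis .
  qed
  have scale: "emeasure M (K q \<rho>) = ennreal (\<rho> ^ d) * emeasure M (K 0 1)" if "\<rho> > 0" for q \<rho>
  proof -
    obtain tq where tq: "\<phi> tq = q" using coord_surj[OF inj sp] unfolding \<phi>_def by blast
    define t where "t i = - tq i / \<rho>" for i
    define f where "f = (\<lambda>x::nat\<Rightarrow>real. restrict (\<lambda>i. t i + (1/\<rho>) * x i) {..<d})"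
    have pre: "f -` K 0 1 \<inter> space M = K q \<rho>"
    proof -
      have eqf: "\<phi> (f x) = (1/\<rho>) *\<^sub>R (\<phi> x - q)" for x
        unfolding tq[symmetric] \<phi>_def f_def t_def
        by (simp add: scaleR_sum_right scaleR_diff_right sum_subtractf[symmetric] algebra_simps
              scaleR_add_left[symmetric] add_divide_distrib diff_divide_distrib)
      moreover have "f x \<in> space M" for x unfolding f_def M_def by (simp add: space_PiM)
      moreover have "norm (\<phi> (f x)) < 1 \<longleftrightarrow> norm (\<phi> x - q) < \<rho>" for x
      proof -
        have "norm (\<phi> (f x)) = norm (\<phi> x - q) / \<rho>" using that unfolding eqf norm_scaleR by simp
        then show ?thesis using that by (simp add: divide_less_eq)
      qed
      ultimately show ?thesis unfolding K_def by auto
    qed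
    have "emeasure M (K 0 1) = ennreal ((1/\<rho>) ^ card {..<d}) * emeasure M (f -` K 0 1 \<inter> space M)"
      unfolding M_def f_def using that Km[of 0 1] unfolding M_def
      by (intro PiM_affine) auto
    then have "emeasure M (K 0 1) = ennreal ((1/\<rho>) ^ d) * emeasure M (K q \<rho>)"
      by (simp add: pre)
    then have "ennreal (\<rho> ^ d) * emeasure M (K 0 1) = ennreal (\<rho> ^ d) * ennreal ((1/\<rho>) ^ d) * emeasure M (K q \<rho>)"
      by (simp add: mult.assoc)
    also have "ennreal (\<rho> ^ d) * ennreal ((1/\<rho>) ^ d) = 1"
      using that by (simp add: ennreal_mult''[symmetric] power_mult_distrib[symmetric])
    finally show ?thesis by simp
  qed
  interpret product_sigma_finite "\<lambda>_::nat. lborel :: real measure" by standard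
  obtain R where R: "R > 0" "\<And>x i. i < d \<Longrightarrow> \<bar>x i\<bar> \<le> R * norm (\<phi> x)"
    using norm_equiv[OF inj ind] unfolding \<phi>_def by blast
  have fin1: "emeasure M (K 0 1) < \<infinity>"
  proof -
    have "K 0 1 \<subseteq> PiE {..<d} (\<lambda>_. {-R..R})"
    proof
      fix x assume x: "x \<in> K 0 1"
      then have "x \<in> space M" "norm (\<phi> x) < 1" unfolding K_def by auto
      then have xs: "x \<in> space M" and n1: "norm (\<phi> x) < 1" by auto
      have "\<bar>x i\<bar> \<le> R" if "i < d" for i
      proof -
        have "\<bar>x i\<bar> \<le> R * norm (\<phi> x)" using R(2) that by blast
        also have "\<dots> \<le> R * 1" using R(1) n1 by (intro mult_left_mono) auto
        finally show ?thesis by simp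
      qed
      then show "x \<in> PiE {..<d} (\<lambda>_. {-R..R})"
        using xs unfolding M_def by (auto simp: space_PiM PiE_iff abs_le_iff) (meson minus_le_iff)
    qed
    then have "emeasure M (K 0 1) \<le> emeasure M (PiE {..<d} (\<lambda>_. {-R..R}))"
      unfolding M_def by (intro emeasure_mono sets_PiM_I_finite) auto
    also have "\<dots> = (\<Prod>i<d. emeasure lborel {-R..R})"
      unfolding M_def by (subst emeasure_PiM) auto
    also have "\<dots> < \<infinity>" using R by (simp add: ennreal_power)
    finally show ?thesis .
  qed
  have pos1: "emeasure M (K 0 1) > 0"
  proof -
    define S where "S = (\<Sum>j<d. norm (b j))"
    define \<delta> where "\<delta> = 1 / (1 + S)"
    have S0: "S \<ge> 0" unfolding S_def by (simp add: sum_nonneg)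
    have \<delta>0: "\<delta> > 0" unfolding \<delta>_def using S0 by simp
    have "PiE {..<d} (\<lambda>_. {-\<delta><..<\<delta>}) \<subseteq> K 0 1"
    proof
      fix x assume x: "x \<in> PiE {..<d} (\<lambda>_. {-\<delta><..<\<delta>})"
      have "norm (\<phi> x) \<le> (\<Sum>j<d. norm (x j *\<^sub>R b j))" unfolding \<phi>_def by (rule norm_sum)
      also have "\<dots> \<le> (\<Sum>j<d. \<delta> * norm (b j))"
      proof (intro sum_mono)
        fix j assume "j \<in> {..<d}"
        then have "x j \<in> {-\<delta><..<\<delta>}" using x by (auto simp: PiE_iff)
        then have "\<bar>x j\<bar> \<le> \<delta>" by auto
        then show "norm (x j *\<^sub>R b j) \<le> \<delta> * norm (b j)" by (simp add: mult_right_mono)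
      qed
      also have "\<dots> = \<delta> * S" unfolding S_def by (simp add: sum_distrib_left)
      also have "\<dots> < 1" unfolding \<delta>_def using S0 by (simp add: field_simps)
      finally have "norm (\<phi> x) < 1" .
      moreover have "x \<in> space M" using x unfolding M_def by (auto simp: space_PiM PiE_iff)
      ultimately show "x \<in> K 0 1" unfolding K_def by simp
    qed
    then have "emeasure M (PiE {..<d} (\<lambda>_. {-\<delta><..<\<delta>})) \<le> emeasure M (K 0 1)"
      using Km by (intro emeasure_mono) auto
    moreover have "emeasure M (PiE {..<d} (\<lambda>_. {-\<delta><..<\<delta>})) = (\<Prod>i<d. emeasure lborel {-\<delta><..<\<delta>})"
      unfolding M_def by (subst emeasure_PiM) auto
    moreover have "(\<Prod>i<d. emeasure lborel {-\<delta><..<\<delta>}) > 0" using \<delta>0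
      by (simp add: ennreal_power)
    ultimately show ?thesis by simp
  qed
  obtain m where m: "emeasure M (K 0 1) = ennreal m" "m > 0"
    using fin1 pos1 by (cases "emeasure M (K 0 1)") (auto)
  define F where "F p = K p (1/2)" for p
  have disj: "disjoint_family_on F P"
    unfolding disjoint_family_on_def
  proof (intro ballI impI)
    fix p p' assume pp: "p \<in> P" "p' \<in> P" "p \<noteq> p'"
    show "F p \<inter> F p' = {}"
    proof (rule ccontr)
      assume "F p \<inter> F p' \<noteq> {}"
      then obtain x where "norm (\<phi> x - p) < 1/2" "norm (\<phi> x - p') < 1/2"
        unfolding F_def K_def by auto
      then have "norm (p - p') < 1"
        using norm_triangle_lt[of "p - \<phi> x" "\<phi> x - p'" 1] by (simp add: norm_minus_commute)
      with sep pp show False by force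
    qed
  qed
  have "(\<Sum>p\<in>P. emeasure M (F p)) = emeasure M (\<Union>p\<in>P. F p)"
    using disj fin Km unfolding F_def by (intro sum_emeasure) auto
  also have "\<dots> \<le> emeasure M (K 0 (5/2))"
  proof (intro emeasure_mono Km)
    show "(\<Union>p\<in>P. F p) \<subseteq> K 0 (5/2)"
    proof
      fix x assume "x \<in> (\<Union>p\<in>P. F p)"
      then obtain p where p: "p \<in> P" "x \<in> space M" "norm (\<phi> x - p) < 1/2" unfolding F_def K_def by auto
      have "norm p \<le> 2" using p sub by auto
      then have "norm (\<phi> x) < 5/2" using p norm_triangle_lt[of "\<phi> x - p" p "5/2"] by simp
      then show "x \<in> K 0 (5/2)" using p unfolding K_def by simp
    qed
  qed
  finally have "(\<Sum>p\<in>P. ennreal ((1/2) ^ d) * ennreal m) \<le> ennreal ((5/2) ^ d) * ennreal m"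
    unfolding F_def using scale m by simp
  then have "ennreal (real (card P) * (1/2) ^ d * m) \<le> ennreal ((5/2) ^ d * m)"
    using m by (simp add: ennreal_mult''[symmetric] ennreal_of_nat_eq_real_of_nat)
  then have "real (card P) * (1/2) ^ d * m \<le> (5/2) ^ d * m"
    using m by (subst (asm) ennreal_le_iff) auto
  then have "real (card P) * (1/2) ^ d \<le> (5/2) ^ d" using m by simp
  then have "real (card P) \<le> 5 ^ d" by (simp add: field_simps power_divide)
  then show ?thesis by (simp flip: of_nat_le_iff)
qed

lemma theta_facts:
  assumes dim: "has_dimension TYPE('a::real_normed_vector) d"
  shows "theta TYPE('a) \<le> 5 ^ d"
    and "\<And>S::'a set. finite S \<Longrightarrow> 0 \<in> S \<Longrightarrow> S \<subseteq> cball 0 2 \<Longrightarrow>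
           (\<forall>x\<in>S. \<forall>y\<in>S. x \<noteq> y \<longrightarrow> 1 \<le> norm (x - y)) \<Longrightarrow> card S \<le> theta TYPE('a)"
proof -
  define Z where "Z = {card S | S::'a set. finite S \<and> 0 \<in> S \<and> S \<subseteq> cball 0 2 \<and>
       (\<forall>x\<in>S. \<forall>y\<in>S. x \<noteq> y \<longrightarrow> norm (x - y) \<ge> 1)}"
  have th: "theta TYPE('a) = Sup Z" unfolding Z_def theta_def by simp
  have bnd: "\<forall>z\<in>Z. z \<le> 5 ^ d" unfolding Z_def using packing[OF dim] by auto
  have "card {0::'a} \<in> Z" unfolding Z_def by (intro CollectI exI[of _ "{0::'a}"]) auto
  then have ne: "Z \<noteq> {}" by blast
  show "theta TYPE('a) \<le> 5 ^ d" unfolding th using ne bnd by (intro cSup_least) auto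
  have bdd: "bdd_above Z" using bnd by (auto simp: bdd_above_def)
  show "card S \<le> theta TYPE('a)" if "finite S" "0 \<in> S" "S \<subseteq> cball 0 2"
      "\<forall>x\<in>S. \<forall>y\<in>S. x \<noteq> y \<longrightarrow> 1 \<le> norm (x - y)" for S :: "'a set"
    unfolding th by (rule cSup_upper[OF _ bdd]) (use that in \<open>auto simp: Z_def\<close>)
qed

lemma knn_props:
  fixes C :: "'a::real_normed_vector set"
  assumes fin: "finite C" and k: "k \<ge> 1" and cC: "card C \<ge> k + 1" and x: "x \<in> C"
  shows "knn_radius k C x > 0"
    and "card {z\<in>C. z \<noteq> x \<and> norm (x - z) < knn_radius k C x} < k"
proof -
  define cnt where "cnt r = card {z\<in>C. z \<noteq> x \<and> norm (x - z) \<le> r}" for r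
  define A where "A = {r. r \<ge> 0 \<and> cnt r \<ge> k}"
  define D where "D = (\<lambda>z. norm (x - z)) ` (C - {x})"
  have kr: "knn_radius k C x = Inf A" unfolding knn_radius_def A_def cnt_def by simp
  have finD: "finite D" unfolding D_def using fin by simp
  have red: "\<exists>r'\<in>A \<inter> D. r' \<le> r" if r: "r \<in> A" for r
  proof -
    define T where "T = {z\<in>C. z \<noteq> x \<and> norm (x - z) \<le> r}"
    have finT: "finite T" unfolding T_def using fin by simp
    have "card T \<ge> 1" using r k unfolding A_def cnt_def T_def by auto
    then have Tne: "T \<noteq> {}" by auto
    define r' where "r' = Max ((\<lambda>z. norm (x - z)) ` T)"
    have r'in: "r' \<in> (\<lambda>z. norm (x - z)) ` T" unfolding r'_def using finT Tne by (intro Max_in) auto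
    have ge: "norm (x - z) \<le> r'" if "z \<in> T" for z unfolding r'_def using finT that by (intro Max_ge) auto
    have r'r: "r' \<le> r" using r'in unfolding T_def by auto
    have "{z\<in>C. z \<noteq> x \<and> norm (x - z) \<le> r'} = T" using ge r'r unfolding T_def by force
    then have "cnt r' = cnt r" unfolding cnt_def T_def by simp
    moreover have "r' \<in> D" using r'in unfolding D_def T_def by auto
    moreover have "r' \<ge> 0" using r'in by auto
    ultimately show ?thesis using r r'r unfolding A_def by auto
  qed
  have AD: "A \<inter> D \<noteq> {}"
  proof -
    have "card (C - {x}) \<ge> 1" using cC k x fin by (simp add: card_Diff_singleton)
    then have "C - {x} \<noteq> {}" by (metis card.empty not_one_le_zero)
    then have Dne: "D \<noteq> {}" unfolding D_def by simp
    define M where "M = Max D"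
    have "norm (x - z) \<le> M" if "z \<in> C - {x}" for z unfolding M_def D_def using fin that by (intro Max_ge) auto
    then have "{z\<in>C. z \<noteq> x \<and> norm (x - z) \<le> M} = C - {x}" by auto
    then have "cnt M = card C - 1" unfolding cnt_def using x fin by simp
    then have "cnt M \<ge> k" using cC by simp
    moreover have "M \<in> D" unfolding M_def using finD Dne by simp
    moreover have "M \<ge> 0" using \<open>M \<in> D\<close> unfolding D_def by auto
    ultimately show ?thesis unfolding A_def by auto
  qed
  define m0 where "m0 = Min (A \<inter> D)"
  have m0in: "m0 \<in> A \<inter> D" unfolding m0_def using AD finD by (intro Min_in) auto
  have m0le: "m0 \<le> r" if rA: "r \<in> A" for r
  proof -
    obtain r' where "r' \<in> A \<inter> D" "r' \<le> r" using red[OF rA] by blast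
    moreover have "m0 \<le> r'" unfolding m0_def using finD \<open>r' \<in> A \<inter> D\<close> by (intro Min_le) auto
    ultimately show ?thesis by simp
  qed
  have eq: "knn_radius k C x = m0" unfolding kr using m0in m0le by (intro cInf_eq_minimum) auto
  show "knn_radius k C x > 0"
  proof -
    obtain z where "z \<in> C - {x}" "m0 = norm (x - z)" using m0in unfolding D_def by auto
    then show ?thesis unfolding eq by auto
  qed
  show "card {z\<in>C. z \<noteq> x \<and> norm (x - z) < knn_radius k C x} < k"
  proof (rule ccontr)
    define T where "T = {z\<in>C. z \<noteq> x \<and> norm (x - z) < m0}"
    assume "\<not> card {z\<in>C. z \<noteq> x \<and> norm (x - z) < knn_radius k C x} < k"
    then have cT: "card T \<ge> k" unfolding T_def eq by simp
    have finT: "finite T" unfolding T_def using fin by simp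
    then have Tne: "T \<noteq> {}" using cT k by auto
    define r'' where "r'' = Max ((\<lambda>z. norm (x - z)) ` T)"
    have r''in: "r'' \<in> (\<lambda>z. norm (x - z)) ` T" unfolding r''_def using finT Tne by (intro Max_in) auto
    have ge: "norm (x - z) \<le> r''" if "z \<in> T" for z unfolding r''_def using finT that by (intro Max_ge) auto
    have lt: "r'' < m0" using r''in unfolding T_def by auto
    have "T \<subseteq> {z\<in>C. z \<noteq> x \<and> norm (x - z) \<le> r''}" using ge unfolding T_def by auto
    then have "card T \<le> cnt r''" unfolding cnt_def using fin by (intro card_mono) auto
    then have "r'' \<in> A" using cT r''in unfolding A_def by auto
    with m0le lt show False by fastforce
  qed
qed

lemma adj_dist:
  assumes "csig_adj k C x y"
  shows "norm (x - y) \<le> knn_radius k C x + knn_radius k C y" "x \<in> C" "y \<in> C" "x \<noteq> y"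
proof -
  from assms obtain p where p: "dist x p \<le> knn_radius k C x" "dist y p \<le> knn_radius k C y"
    unfolding csig_adj_def by auto
  have "norm (x - y) = dist x y" by (simp add: dist_norm)
  also have "\<dots> \<le> dist x p + dist p y" by (rule dist_triangle)
  also have "\<dots> \<le> knn_radius k C x + knn_radius k C y" using p by (simp add: dist_commute)
  finally show "norm (x - y) \<le> knn_radius k C x + knn_radius k C y" .
  show "x \<in> C" "y \<in> C" "x \<noteq> y" using assms unfolding csig_adj_def by auto
qed

definition proj :: "real \<Rightarrow> 'a::real_normed_vector \<Rightarrow> 'a" where
  "proj r a = (if norm a \<le> 2 * r then (1 / r) *\<^sub>R a else (2 / norm a) *\<^sub>R a)"

lemma proj_norm_le: "r > 0 \<Longrightarrow> norm (proj r a) \<le> 2"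
  by (auto simp: proj_def divide_le_eq)

lemma proj_norm_ge: "r > 0 \<Longrightarrow> r \<le> norm a \<Longrightarrow> 1 \<le> norm (proj r a)"
  by (auto simp: proj_def le_divide_eq)

lemma proj_case2:
  fixes a b :: "'a::real_normed_vector"
  assumes r: "r > 0" and A: "norm a \<le> 2 * r" and B: "norm b > 2 * r"
    and lt: "norm (proj r a - proj r b) < 1"
  shows "norm (a - b) < norm b - r"
proof -
  define B' where "B' = norm b"
  have Bpos: "B' > 0" using B r unfolding B'_def by linarith
  have "b \<noteq> 0" using B r by (intro notI) simp
  then have pa: "proj r a = (1/r) *\<^sub>R a" and pb: "proj r b = (2/B') *\<^sub>R b"
    using A B unfolding proj_def B'_def by auto
  have id: "a - b = r *\<^sub>R ((1/r) *\<^sub>R a - (2/B') *\<^sub>R b) + ((2*r/B') - 1) *\<^sub>R b"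
    using r Bpos by (simp add: algebra_simps)
  have "norm (a - b) \<le> norm (r *\<^sub>R ((1/r) *\<^sub>R a - (2/B') *\<^sub>R b)) + norm (((2*r/B') - 1) *\<^sub>R b)"
    unfolding id by (rule norm_triangle_ineq)
  also have "norm (r *\<^sub>R ((1/r) *\<^sub>R a - (2/B') *\<^sub>R b)) = r * norm (proj r a - proj r b)"
    using r by (simp add: pa pb)
  also have "norm (((2*r/B') - 1) *\<^sub>R b) = \<bar>2*r/B' - 1\<bar> * B'" by (simp add: B'_def)
  also have "\<bar>2*r/B' - 1\<bar> * B' = B' - 2 * r"
    using B Bpos unfolding B'_def[symmetric] by (simp add: abs_if field_simps)
  also have "r * norm (proj r a - proj r b) < r * 1" using r lt by simp
  finally show ?thesis unfolding B'_def by linarith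
qed

lemma proj_case4:
  fixes a b :: "'a::real_normed_vector"
  assumes r: "r > 0" and A: "norm a > 2 * r" and B: "norm b > 2 * r" and AB: "norm a \<le> norm b"
    and lt: "norm (proj r a - proj r b) < 1"
  shows "norm (a - b) < norm b - r"
proof -
  define A' where "A' = norm a"
  define B' where "B' = norm b"
  have Apos: "A' > 0" using A r unfolding A'_def by linarith
  have Bpos: "B' > 0" using B r unfolding B'_def by linarith
  have "a \<noteq> 0" "b \<noteq> 0" using A B r by (auto intro!: notI)
  then have pa: "proj r a = (2/A') *\<^sub>R a" and pb: "proj r b = (2/B') *\<^sub>R b"
    using A B r unfolding proj_def A'_def B'_def by auto
  have id: "a - b = (A'/2) *\<^sub>R ((2/A') *\<^sub>R a - (2/B') *\<^sub>R b) + ((A'/B') - 1) *\<^sub>R b"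
    using Apos Bpos by (simp add: algebra_simps)
  have "norm (a - b) \<le> norm ((A'/2) *\<^sub>R ((2/A') *\<^sub>R a - (2/B') *\<^sub>R b)) + norm (((A'/B') - 1) *\<^sub>R b)"
    unfolding id by (rule norm_triangle_ineq)
  also have "norm ((A'/2) *\<^sub>R ((2/A') *\<^sub>R a - (2/B') *\<^sub>R b)) = (A'/2) * norm (proj r a - proj r b)"
    using Apos by (simp add: pa pb)
  also have "norm (((A'/B') - 1) *\<^sub>R b) = \<bar>A'/B' - 1\<bar> * B'" by (simp add: B'_def)
  also have "\<bar>A'/B' - 1\<bar> * B' = B' - A'"
    using AB Bpos unfolding A'_def[symmetric] B'_def[symmetric] by (simp add: abs_if field_simps)
  also have "(A'/2) * norm (proj r a - proj r b) < (A'/2) * 1" using Apos lt by simp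
  finally have "norm (a - b) < A' / 2 + (B' - A')" by simp
  then show ?thesis using A unfolding A'_def B'_def by simp
qed

lemma proj_lemma:
  fixes a b :: "'a::real_normed_vector"
  assumes r: "r > 0" and lt: "norm (proj r a - proj r b) < 1"
  shows "norm (a - b) < max (max (norm a) (norm b)) (2 * r) - r"
proof -
  have lt': "norm (proj r b - proj r a) < 1" using lt by (simp add: norm_minus_commute)
  consider "norm a \<le> 2*r" "norm b \<le> 2*r" | "norm a \<le> 2*r" "norm b > 2*r" | "norm a > 2*r" "norm b \<le> 2*r"
    | "norm a > 2*r" "norm b > 2*r" "norm a \<le> norm b" | "norm a > 2*r" "norm b > 2*r" "norm b \<le> norm a"
    by linarith
  then show ?thesis
  proof cases
    case 1
    have "a - b = r *\<^sub>R (proj r a - proj r b)" using 1 r by (simp add: proj_def algebra_simps)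
    then have "norm (a - b) = r * norm (proj r a - proj r b)" using r by simp
    also have "\<dots> < r * 1" using r lt by simp
    finally show ?thesis by simp
  next
    case 2 then show ?thesis using proj_case2[OF r _ _ lt] by simp
  next
    case 3 then show ?thesis using proj_case2[OF r _ _ lt'] by (simp add: norm_minus_commute)
  next
    case 4 then show ?thesis using proj_case4[OF r _ _ _ lt] by simp
  next
    case 5 then show ?thesis using proj_case4[OF r _ _ _ lt'] by (simp add: norm_minus_commute)
  qed
qed

lemma cluster:
  fixes U :: "'a::real_normed_vector set" and w :: "'a \<Rightarrow> real" and q :: "'a \<Rightarrow> 'a"
  assumes finU: "finite U" and k: "k \<ge> 1"
    and H1: "\<And>y z. y \<in> U \<Longrightarrow> z \<in> U \<Longrightarrow> y \<noteq> z \<Longrightarrow> norm (q y - q z) < 1 \<Longrightarrow> norm (y - z) < max (w y) (w z)"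
    and H2: "\<And>z. z \<in> U \<Longrightarrow> card {y\<in>U. y \<noteq> z \<and> norm (y - z) < w z} \<le> k - 1"
    and TU: "T \<subseteq> U"
  shows "\<exists>S\<subseteq>T. (\<forall>y\<in>S. \<forall>z\<in>S. y \<noteq> z \<longrightarrow> 1 \<le> norm (q y - q z)) \<and> card T \<le> k * card S"
proof -
  have "finite T" using finU TU by (rule finite_subset[rotated])
  then show ?thesis using TU
  proof (induction T rule: finite_psubset_induct)
    case (psubset T)
    show ?case
    proof (cases "T = {}")
      case True then show ?thesis by auto
    next
      case False
      obtain z where zT: "z \<in> T" and zmax: "\<And>y. y \<in> T \<Longrightarrow> w y \<le> w z"
      proof -
        have "Max (w ` T) \<in> w ` T" using psubset.hyps False by (intro Max_in) auto
        then obtain z where "z \<in> T" "w z = Max (w ` T)" by auto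
        moreover have "\<And>y. y \<in> T \<Longrightarrow> w y \<le> Max (w ` T)" using psubset.hyps by (intro Max_ge) auto
        ultimately show ?thesis using that by auto
      qed
      define R where "R = {y\<in>T. norm (q y - q z) < 1}"
      have zR: "z \<in> R" unfolding R_def using zT by simp
      have RT: "R \<subseteq> T" unfolding R_def by auto
      have "R \<subseteq> insert z {y\<in>U. y \<noteq> z \<and> norm (y - z) < w z}"
      proof
        fix y assume y: "y \<in> R"
        show "y \<in> insert z {y\<in>U. y \<noteq> z \<and> norm (y - z) < w z}"
        proof (cases "y = z")
          case False
          have yT: "y \<in> T" using y unfolding R_def by simp
          have "norm (y - z) < max (w y) (w z)"
            using H1[of y z] y zT psubset.prems False unfolding R_def by auto
          also have "max (w y) (w z) = w z" using zmax[OF yT] by simp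
          finally show ?thesis using yT psubset.prems by auto
        qed simp
      qed
      then have "card R \<le> card (insert z {y\<in>U. y \<noteq> z \<and> norm (y - z) < w z})"
        using finU by (intro card_mono) auto
      also have "\<dots> \<le> Suc (card {y\<in>U. y \<noteq> z \<and> norm (y - z) < w z})" by (rule card_insert_le_m1) auto
      also have "\<dots> \<le> k" using H2[of z] zT psubset.prems k by auto
      finally have cR: "card R \<le> k" .
      have sub: "T - R \<subset> T" using zR zT by auto
      obtain S' where S': "S' \<subseteq> T - R" "\<forall>y\<in>S'. \<forall>z\<in>S'. y \<noteq> z \<longrightarrow> 1 \<le> norm (q y - q z)"
        "card (T - R) \<le> k * card S'"
        using psubset.IH[OF sub] psubset.prems by auto
      have zS': "z \<notin> S'" using S'(1) zR by auto
      have finS': "finite S'" using S'(1) psubset.hyps finite_subset by blast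
      show ?thesis
      proof (intro exI[of _ "insert z S'"] conjI)
        show "insert z S' \<subseteq> T" using S'(1) zT by auto
        show "\<forall>y\<in>insert z S'. \<forall>x\<in>insert z S'. y \<noteq> x \<longrightarrow> 1 \<le> norm (q y - q x)"
        proof (intro ballI impI)
          fix y x assume yx: "y \<in> insert z S'" "x \<in> insert z S'" "y \<noteq> x"
          have far: "1 \<le> norm (q u - q z)" if "u \<in> S'" for u
            using that S'(1) unfolding R_def by auto
          show "1 \<le> norm (q y - q x)"
            using yx S'(2) far by (auto simp: norm_minus_commute)
        qed
        have fR: "finite R" using RT psubset.hyps finite_subset by blast
        have "card (T - R) = card T - card R" using RT fR by (rule card_Diff_subset[rotated])
        moreover have "card R \<le> card T" using RT psubset.hyps by (rule card_mono[rotated])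
        ultimately have "card T = card R + card (T - R)" by simp
        also have "\<dots> \<le> k + k * card S'" using cR S'(3) by simp
        also have "\<dots> = k * card (insert z S')" using zS' finS' by simp
        finally show "card T \<le> k * card (insert z S')" .
      qed
    qed
  qed
qed

lemma degree_bound:
  fixes C :: "'a::real_normed_vector set"
  assumes dim: "has_dimension TYPE('a) d" and fin: "finite C" and k: "k \<ge> 1"
    and cC: "card C \<ge> k + 1" and x: "x \<in> C"
    and H: "\<And>y z. y \<in> C \<Longrightarrow> z \<in> C \<Longrightarrow> y \<noteq> z \<Longrightarrow> y \<noteq> x \<Longrightarrow> z \<noteq> x \<Longrightarrow>
              knn_radius k C x \<le> max (knn_radius k C y) (knn_radius k C z)"
  shows "csig_degree k C x < theta TYPE('a) * k"
proof -
  define rr where "rr = knn_radius k C"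
  define r where "r = rr x"
  have r0: "r > 0" unfolding r_def rr_def using knn_props(1)[OF fin k cC x] .
  define N where "N = {y\<in>C. csig_adj k C x y}"
  have Nprop: "y \<in> C" "y \<noteq> x" "norm (x - y) \<le> r + rr y" if "y \<in> N" for y
    using adj_dist[of k C x y] that unfolding N_def r_def rr_def by auto
  define N1 where "N1 = {y\<in>N. norm (y - x) < r}"
  define N2 where "N2 = {y\<in>N. r \<le> norm (y - x)}"
  have finN: "finite N" unfolding N_def using fin by simp
  have NU: "N = N1 \<union> N2" unfolding N1_def N2_def by auto
  have cN1: "card N1 < k"
  proof -
    have "N1 \<subseteq> {z\<in>C. z \<noteq> x \<and> norm (x - z) < knn_radius k C x}"
      using Nprop unfolding N1_def r_def rr_def by (auto simp: norm_minus_commute)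
    then have "card N1 \<le> card {z\<in>C. z \<noteq> x \<and> norm (x - z) < knn_radius k C x}"
      using fin by (intro card_mono) auto
    then show ?thesis using knn_props(2)[OF fin k cC x] by simp
  qed
  define q where "q y = proj r (y - x)" for y
  have finN2: "finite N2" unfolding N2_def using finN by simp
  obtain S where S: "S \<subseteq> N2" "\<forall>y\<in>S. \<forall>z\<in>S. y \<noteq> z \<longrightarrow> 1 \<le> norm (q y - q z)"
    "card N2 \<le> k * card S"
  proof -
    have "\<exists>S\<subseteq>N2. (\<forall>y\<in>S. \<forall>z\<in>S. y \<noteq> z \<longrightarrow> 1 \<le> norm (q y - q z)) \<and> card N2 \<le> k * card S"
    proof (rule cluster[OF finN2 k _ _ order_refl, where w = rr])
      fix y z assume yz: "y \<in> N2" "z \<in> N2" "y \<noteq> z" "norm (q y - q z) < 1"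
      have "norm ((y - x) - (z - x)) < max (max (norm (y - x)) (norm (z - x))) (2 * r) - r"
        using proj_lemma[OF r0] yz(4) unfolding q_def by blast
      moreover have "norm (y - x) - r \<le> rr y" "norm (z - x) - r \<le> rr z"
        using Nprop(3)[of y] Nprop(3)[of z] yz unfolding N2_def by (simp_all add: norm_minus_commute)
      moreover have "r \<le> max (rr y) (rr z)"
        using H[of y z] Nprop yz unfolding N2_def r_def rr_def by auto
      ultimately show "norm (y - z) < max (rr y) (rr z)" by (simp add: max_def split: if_splits)
    next
      fix z assume z: "z \<in> N2"
      have zC: "z \<in> C" using z Nprop unfolding N2_def by auto
      have "{y\<in>N2. y \<noteq> z \<and> norm (y - z) < rr z} \<subseteq> {y\<in>C. y \<noteq> z \<and> norm (z - y) < knn_radius k C z}"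
        using Nprop unfolding N2_def rr_def by (auto simp: norm_minus_commute)
      then have "card {y\<in>N2. y \<noteq> z \<and> norm (y - z) < rr z} \<le> card {y\<in>C. y \<noteq> z \<and> norm (z - y) < knn_radius k C z}"
        using fin by (intro card_mono) auto
      then show "card {y\<in>N2. y \<noteq> z \<and> norm (y - z) < rr z} \<le> k - 1"
        using knn_props(2)[OF fin k cC zC] by simp
    qed
    then show ?thesis using that by blast
  qed
  define P where "P = insert 0 (q ` S)"
  have qge: "1 \<le> norm (q y)" if "y \<in> S" for y
    using that S(1) r0 unfolding q_def N2_def by (auto intro: proj_norm_ge)
  have finS: "finite S" using S(1) finN2 finite_subset by blast
  have injq: "inj_on q S"
  proof (rule inj_onI)
    fix y z assume "y \<in> S" "z \<in> S" "q y = q z"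
    then show "y = z" using S(2) by force
  qed
  have 0: "0 \<notin> q ` S" using qge by force
  have cP: "card P = card S + 1" unfolding P_def using 0 finS injq by (simp add: card_image)
  have "card P \<le> theta TYPE('a)"
  proof (rule theta_facts(2)[OF dim])
    show "finite P" unfolding P_def using finS by simp
    show "0 \<in> P" unfolding P_def by simp
    show "P \<subseteq> cball 0 2" unfolding P_def q_def using r0 by (auto intro: proj_norm_le)
    show "\<forall>u\<in>P. \<forall>v\<in>P. u \<noteq> v \<longrightarrow> 1 \<le> norm (u - v)"
      unfolding P_def using qge S(2) by (auto simp: norm_minus_commute)
  qed
  then have th: "card S + 1 \<le> theta TYPE('a)" using cP by simp
  have "csig_degree k C x = card N" unfolding csig_degree_def N_def by simp
  also have "\<dots> \<le> card N1 + card N2" unfolding NU by (rule card_Un_le)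
  also have "\<dots> < k + k * card S" using cN1 S(3) by simp
  also have "\<dots> = k * (card S + 1)" by simp
  also have "\<dots> \<le> k * theta TYPE('a)" using th by (rule mult_le_mono2)
  finally show ?thesis by (simp add: mult.commute)
qed

theorem mainTheorem1:
  fixes C :: "'a::real_normed_vector set" and d k :: nat
  assumes "has_dimension TYPE('a) d"
    and "k \<ge> 1"
    and "finite C" and "card C \<ge> 2" and "card C \<ge> k + 1"
  shows "(\<exists>x\<in>C. \<exists>y\<in>C. x \<noteq> y \<and>
            real (csig_degree k C x) < real (theta TYPE('a) * k) \<and>
            real (csig_degree k C y) < real (theta TYPE('a) * k))
         \<and> theta TYPE('a) * k \<le> 5 ^ d * k"
proof
  note dim = assms(1) and k = assms(2) and fin = assms(3) and c2 = assms(4) and cC = assms(5)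
  define rr where "rr = knn_radius k C"
  have Cne: "C \<noteq> {}" using c2 by auto
  obtain x1 where x1: "x1 \<in> C" "\<And>y. y \<in> C \<Longrightarrow> rr x1 \<le> rr y"
  proof -
    have "Min (rr ` C) \<in> rr ` C" using fin Cne by (intro Min_in) auto
    then obtain x1 where "x1 \<in> C" "rr x1 = Min (rr ` C)" by auto
    moreover have "\<And>y. y \<in> C \<Longrightarrow> Min (rr ` C) \<le> rr y" using fin by (intro Min_le) auto
    ultimately show ?thesis using that by auto
  qed
  have C1ne: "C - {x1} \<noteq> {}"
  proof
    assume "C - {x1} = {}"
    then have "C \<subseteq> {x1}" by auto
    then have "card C \<le> card {x1}" by (intro card_mono) auto
    then have "card C \<le> 1" by simp
    with c2 show False by simp
  qed
  obtain x2 where x2: "x2 \<in> C - {x1}" "\<And>y. y \<in> C - {x1} \<Longrightarrow> rr x2 \<le> rr y"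
  proof -
    have "Min (rr ` (C - {x1})) \<in> rr ` (C - {x1})" using fin C1ne by (intro Min_in) auto
    then obtain x2 where "x2 \<in> C - {x1}" "rr x2 = Min (rr ` (C - {x1}))" by (metis imageE)
    moreover have "\<And>y. y \<in> C - {x1} \<Longrightarrow> Min (rr ` (C - {x1})) \<le> rr y" using fin by (intro Min_le) auto
    ultimately show ?thesis using that by auto
  qed
  have d1: "csig_degree k C x1 < theta TYPE('a) * k"
  proof (rule degree_bound[OF dim fin k cC x1(1)])
    fix y z assume "y \<in> C" "z \<in> C"
    then show "knn_radius k C x1 \<le> max (knn_radius k C y) (knn_radius k C z)"
      using x1(2) unfolding rr_def by (simp add: le_max_iff_disj)
  qed
  have d2: "csig_degree k C x2 < theta TYPE('a) * k"
  proof (rule degree_bound[OF dim fin k cC])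
    show "x2 \<in> C" using x2 by simp
    fix y z assume yz: "y \<in> C" "z \<in> C" "y \<noteq> z"
    show "knn_radius k C x2 \<le> max (knn_radius k C y) (knn_radius k C z)"
    proof (cases "y = x1")
      case True
      then have "z \<in> C - {x1}" using yz by auto
      then show ?thesis using x2(2) unfolding rr_def by (simp add: le_max_iff_disj)
    next
      case False
      then have "y \<in> C - {x1}" using yz by auto
      then show ?thesis using x2(2) unfolding rr_def by (simp add: le_max_iff_disj)
    qed
  qed
  show "\<exists>x\<in>C. \<exists>y\<in>C. x \<noteq> y \<and>
            real (csig_degree k C x) < real (theta TYPE('a) * k) \<and>
            real (csig_degree k C y) < real (theta TYPE('a) * k)"
  proof -
    have ne: "x1 \<noteq> x2" using x2(1) by auto
    have "x1 \<noteq> x2 \<and> real (csig_degree k C x1) < real (theta TYPE('a) * k) \<and>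
            real (csig_degree k C x2) < real (theta TYPE('a) * k)"
      using ne d1 d2 by (simp only: of_nat_less_iff simp_thms)
    then show ?thesis using x1(1) x2(1) by blast
  qed
next
  show "theta TYPE('a) * k \<le> 5 ^ d * k"
    using theta_facts(1)[OF assms(1)] by simp
qed

end
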